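(* Let $p$ be an odd prime and let $(G,H,T)$ be the envelope of a right conjugacy closed loop of order $2p$. Let $K$ be a subgroup with $H\lneq K\lneq G$, $|G:K|=2$ and $|K:H|=p$, and put $K_1=\langle T\cap K\rangle$, $H_1=H\cap K_1$. Assume $H\ne1$ and $[s,K_1]=1$ for all $s\in T\setminus K$. Then $H_1=1$, $K_1\le Z(G)$, and $G\cong C_p\wr C_2$.
   Context: For a finite loop $\mathcal{L}$ with identity $e$: $G=\langle R_a\mid a\in\mathcal L\rangle$ with $R_a\colon x\mapsto xa$, $H$ the stabilizer of $e$ in $G$, $T=\{R_a\}$; $(G,H,T)$ is the envelope; the loop is right conjugacy closed if $T$ is a union of conjugacy classes of $G$. *)

theory Defs
  imports "HOL-Algebra.Algebra"
begin

definition loop :: "'a set \<Rightarrow> ('a \<Rightarrow> 'a \<Rightarrow> 'a) \<Rightarrow> 'a \<Rightarrow> bool" where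
  "loop L m e \<longleftrightarrow> e \<in> L \<and> (\<forall>x\<in>L. \<forall>y\<in>L. m x y \<in> L)
     \<and> (\<forall>x\<in>L. m e x = x \<and> m x e = x)
     \<and> (\<forall>a\<in>L. \<forall>b\<in>L. \<exists>!x. x \<in> L \<and> m a x = b)
     \<and> (\<forall>a\<in>L. \<forall>b\<in>L. \<exists>!y. y \<in> L \<and> m y a = b)"

definition rmult :: "'a set \<Rightarrow> ('a \<Rightarrow> 'a \<Rightarrow> 'a) \<Rightarrow> 'a \<Rightarrow> ('a \<Rightarrow> 'a)" where
  "rmult L m a = (\<lambda>x\<in>L. m x a)"

definition rmults :: "'a set \<Rightarrow> ('a \<Rightarrow> 'a \<Rightarrow> 'a) \<Rightarrow> ('a \<Rightarrow> 'a) set" where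
  "rmults L m = rmult L m ` L"

definition rmlt_group :: "'a set \<Rightarrow> ('a \<Rightarrow> 'a \<Rightarrow> 'a) \<Rightarrow> ('a \<Rightarrow> 'a) monoid" where
  "rmlt_group L m = (BijGroup L)\<lparr>carrier := generate (BijGroup L) (rmults L m)\<rparr>"

definition env_stab :: "'a set \<Rightarrow> ('a \<Rightarrow> 'a \<Rightarrow> 'a) \<Rightarrow> 'a \<Rightarrow> ('a \<Rightarrow> 'a) set" where
  "env_stab L m e = {g \<in> carrier (rmlt_group L m). g e = e}"

definition rcc_loop :: "'a set \<Rightarrow> ('a \<Rightarrow> 'a \<Rightarrow> 'a) \<Rightarrow> 'a \<Rightarrow> bool" where
  "rcc_loop L m e \<longleftrightarrow> loop L m e \<and>
     (\<forall>g\<in>carrier (rmlt_group L m). \<forall>t\<in>rmults L m.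
        g \<otimes>\<^bsub>rmlt_group L m\<^esub> t \<otimes>\<^bsub>rmlt_group L m\<^esub> inv\<^bsub>rmlt_group L m\<^esub> g \<in> rmults L m)"

definition group_center :: "('g, 'b) monoid_scheme \<Rightarrow> 'g set" where
  "group_center G = {z \<in> carrier G. \<forall>g\<in>carrier G. z \<otimes>\<^bsub>G\<^esub> g = g \<otimes>\<^bsub>G\<^esub> z}"

text \<open>The wreath product C_p wr C_2 = (C_p x C_p) semidirect C_2, C_2 swapping the coordinates:
  (v,s)(w,t) = (v + s.w, s+t).\<close>
definition wreath_mult :: "nat \<Rightarrow> (nat \<times> nat) \<times> bool \<Rightarrow> (nat \<times> nat) \<times> bool \<Rightarrow> (nat \<times> nat) \<times> bool" where
  "wreath_mult p x y =
     (let w = (if snd x then prod.swap (fst y) else fst y)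
      in (((fst (fst x) + fst w) mod p, (snd (fst x) + snd w) mod p), snd x \<noteq> snd y))"

definition wreath_Cp_C2 :: "nat \<Rightarrow> ((nat \<times> nat) \<times> bool) monoid" where
  "wreath_Cp_C2 p =
     \<lparr>carrier = ({0..<p} \<times> {0..<p}) \<times> (UNIV :: bool set),
      monoid.mult = wreath_mult p,
      one = ((0, 0), False)\<rparr>"

end

theory Submission imports Defs begin

lemma loop_e: "loop L m e \<Longrightarrow> e \<in> L"
  unfolding loop_def by (erule conjunct1)
lemma loop_cl: "loop L m e \<Longrightarrow> x \<in> L \<Longrightarrow> y \<in> L \<Longrightarrow> m x y \<in> L"
  unfolding loop_def by (drule conjunct2, drule conjunct1) blast
lemma loop_id: "loop L m e \<Longrightarrow> x \<in> L \<Longrightarrow> m e x = x \<and> m x e = x"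
  unfolding loop_def by (drule conjunct2, drule conjunct2, drule conjunct1) blast
lemma loop_ld: "loop L m e \<Longrightarrow> a \<in> L \<Longrightarrow> b \<in> L \<Longrightarrow> \<exists>!x. x \<in> L \<and> m a x = b"
  unfolding loop_def by (drule conjunct2, drule conjunct2, drule conjunct2, drule conjunct1) blast
lemma loop_rd: "loop L m e \<Longrightarrow> a \<in> L \<Longrightarrow> b \<in> L \<Longrightarrow> \<exists>!y. y \<in> L \<and> m y a = b"
  unfolding loop_def by (drule conjunct2, drule conjunct2, drule conjunct2, drule conjunct2) blast

lemma rmult_Bij:
  assumes lp: "loop L m e" and a: "a \<in> L"
  shows "rmult L m a \<in> Bij L"
proof -
  have inj: "inj_on (\<lambda>x. m x a) L"
  proof (rule inj_onI)
    fix x y assume xy: "x \<in> L" "y \<in> L" "m x a = m y a"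
    have "m x a \<in> L" using loop_cl[OF lp xy(1) a] .
    then obtain z where "z \<in> L \<and> m z a = m x a" "\<And>w. w \<in> L \<and> m w a = m x a \<Longrightarrow> w = z"
      using loop_rd[OF lp a] by metis
    thus "x = y" using xy by metis
  qed
  have "(\<lambda>x. m x a) ` L = L"
  proof
    show "(\<lambda>x. m x a) ` L \<subseteq> L" using loop_cl[OF lp _ a] by blast
    show "L \<subseteq> (\<lambda>x. m x a) ` L"
    proof
      fix b assume "b \<in> L"
      then obtain y where "y \<in> L" "m y a = b" using loop_rd[OF lp a] by metis
      thus "b \<in> (\<lambda>x. m x a) ` L" by blast
    qed
  qed
  hence "bij_betw (\<lambda>x. m x a) L L" using inj by (simp add: bij_betw_def)
  hence "bij_betw (rmult L m a) L L" unfolding rmult_def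
    by (rule bij_betw_cong[THEN iffD1, rotated]) simp
  thus ?thesis unfolding Bij_def rmult_def by simp
qed
locale P55 =
  fixes L :: "'a set" and m :: "'a \<Rightarrow> 'a \<Rightarrow> 'a" and e :: 'a and p :: nat
    and K :: "('a \<Rightarrow> 'a) set"
  assumes lp: "loop L m e" and pr: "Factorial_Ring.prime p" and finL: "finite L" and cardL: "card L = 2 * p"
    and subK: "subgroup K (rmlt_group L m)"
    and HK: "env_stab L m e \<subseteq> K" and KG: "K \<noteq> carrier (rmlt_group L m)"
    and cos: "card {env_stab L m e #>\<^bsub>rmlt_group L m\<^esub> k | k. k \<in> K} = p"
    and Hne: "env_stab L m e \<noteq> {\<one>\<^bsub>rmlt_group L m\<^esub>}"
    and cm: "\<forall>s \<in> rmults L m - K. \<forall>k \<in> generate (rmlt_group L m) (rmults L m \<inter> K).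
          s \<otimes>\<^bsub>rmlt_group L m\<^esub> k = k \<otimes>\<^bsub>rmlt_group L m\<^esub> s"
begin

abbreviation "G \<equiv> rmlt_group L m"
abbreviation "H \<equiv> env_stab L m e"
abbreviation "T \<equiv> rmults L m"
abbreviation "K1 \<equiv> generate G (T \<inter> K)"

lemma eL: "e \<in> L" using loop_e[OF lp] .

lemma T_Bij: "T \<subseteq> Bij L"
  using rmult_Bij[OF lp] unfolding rmults_def by blast

lemma BG: "group (BijGroup L)" by (rule group_BijGroup)

lemma carrG: "carrier G = generate (BijGroup L) T"
  by (simp add: rmlt_group_def)

lemma subG: "subgroup (carrier G) (BijGroup L)"
  unfolding carrG by (rule group.generate_is_subgroup[OF BG]) (simp add: BijGroup_def T_Bij)

lemma grpG: "group G"
proof -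
  have "G = (BijGroup L)\<lparr>carrier := carrier G\<rparr>" by (simp add: rmlt_group_def)
  thus ?thesis using subgroup.subgroup_is_group[OF subG BG] by metis
qed

lemma G_Bij: "carrier G \<subseteq> Bij L"
  using subgroup.subset[OF subG] by (simp add: BijGroup_def)

lemma multG: "g \<in> carrier G \<Longrightarrow> h \<in> carrier G \<Longrightarrow> g \<otimes>\<^bsub>G\<^esub> h = compose L g h"
proof -
  assume "g \<in> carrier G" "h \<in> carrier G"
  hence "g \<in> Bij L" "h \<in> Bij L" using G_Bij by blast+
  moreover have "g \<otimes>\<^bsub>G\<^esub> h = g \<otimes>\<^bsub>BijGroup L\<^esub> h" by (simp add: rmlt_group_def)
  ultimately show ?thesis by (simp add: BijGroup_def)
qed

lemma oneG: "\<one>\<^bsub>G\<^esub> = (\<lambda>x\<in>L. x)"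
  by (simp add: rmlt_group_def BijGroup_def)

lemma app: "g \<in> carrier G \<Longrightarrow> h \<in> carrier G \<Longrightarrow> x \<in> L \<Longrightarrow> (g \<otimes>\<^bsub>G\<^esub> h) x = g (h x)"
  by (simp add: multG compose_def)

lemma maps: "g \<in> carrier G \<Longrightarrow> x \<in> L \<Longrightarrow> g x \<in> L"
  using G_Bij unfolding Bij_def bij_betw_def by blast

lemma injG: "g \<in> carrier G \<Longrightarrow> x \<in> L \<Longrightarrow> y \<in> L \<Longrightarrow> g x = g y \<Longrightarrow> x = y"
  using G_Bij unfolding Bij_def bij_betw_def inj_on_def by blast

lemma extG: "g \<in> carrier G \<Longrightarrow> h \<in> carrier G \<Longrightarrow> (\<And>x. x \<in> L \<Longrightarrow> g x = h x) \<Longrightarrow> g = h"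
proof -
  assume g: "g \<in> carrier G" and h: "h \<in> carrier G" and eq: "\<And>x. x \<in> L \<Longrightarrow> g x = h x"
  have "g \<in> extensional L" "h \<in> extensional L" using g h G_Bij unfolding Bij_def by blast+
  thus ?thesis using eq extensionalityI by metis
qed

lemma one_app: "x \<in> L \<Longrightarrow> \<one>\<^bsub>G\<^esub> x = x" by (simp add: oneG)

lemma inv_app: "g \<in> carrier G \<Longrightarrow> x \<in> L \<Longrightarrow> (inv\<^bsub>G\<^esub> g) (g x) = x"
proof -
  assume g: "g \<in> carrier G" and x: "x \<in> L"
  have "(inv\<^bsub>G\<^esub> g) (g x) = (inv\<^bsub>G\<^esub> g \<otimes>\<^bsub>G\<^esub> g) x"
    using g x by (simp add: app group.inv_closed[OF grpG])
  also have "\<dots> = x" using g x by (simp add: group.l_inv[OF grpG] one_app)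
  finally show ?thesis .
qed

lemma app_inv: "g \<in> carrier G \<Longrightarrow> x \<in> L \<Longrightarrow> g ((inv\<^bsub>G\<^esub> g) x) = x"
proof -
  assume g: "g \<in> carrier G" and x: "x \<in> L"
  have "g ((inv\<^bsub>G\<^esub> g) x) = (g \<otimes>\<^bsub>G\<^esub> inv\<^bsub>G\<^esub> g) x"
    using g x by (simp add: app group.inv_closed[OF grpG])
  also have "\<dots> = x" using g x by (simp add: group.r_inv[OF grpG] one_app)
  finally show ?thesis .
qed

lemma T_G: "T \<subseteq> carrier G"
  unfolding carrG by (blast intro: generate.incl)

lemma rm_G: "a \<in> L \<Longrightarrow> rmult L m a \<in> carrier G"
  using T_G unfolding rmults_def by blast

lemma rm_e: "a \<in> L \<Longrightarrow> rmult L m a e = a"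
  using loop_id[OF lp] eL unfolding rmult_def by simp

lemma rm_app: "a \<in> L \<Longrightarrow> x \<in> L \<Longrightarrow> rmult L m a x = m x a"
  unfolding rmult_def by simp


interpretation Gr: group G by (rule grpG)

lemma G_eq: "G = (BijGroup L)\<lparr>carrier := carrier G\<rparr>" by (simp add: rmlt_group_def)

lemma carrG2: "carrier G = generate G T"
proof -
  have "generate ((BijGroup L)\<lparr>carrier := carrier G\<rparr>) T = generate (BijGroup L) T"
    using group.generate_consistent[OF BG T_G subG] .
  thus ?thesis using G_eq carrG by metis
qed

lemma K_G: "K \<subseteq> carrier G" using subgroup.subset[OF subK] .

lemma H_eq: "H = {g \<in> carrier G. g e = e}" by (simp add: env_stab_def)

lemma H_sub: "subgroup H G"
proof (rule Gr.subgroupI)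
  show "H \<subseteq> carrier G" using H_eq by blast
  show "H \<noteq> {}" using H_eq eL one_app by auto
  fix a assume a: "a \<in> H"
  hence "a \<in> carrier G" "a e = e" using H_eq by auto
  thus "inv\<^bsub>G\<^esub> a \<in> H" using H_eq inv_app[of a e] eL by auto
next
  fix a b assume "a \<in> H" "b \<in> H"
  hence "a \<in> carrier G" "a e = e" "b \<in> carrier G" "b e = e" using H_eq by auto
  thus "a \<otimes>\<^bsub>G\<^esub> b \<in> H" using H_eq app eL by auto
qed

definition "B0 = (\<lambda>k. k e) ` K"

lemma B0_L: "B0 \<subseteq> L" unfolding B0_def using K_G maps eL by blast

lemma inK_iff: assumes g: "g \<in> carrier G" shows "g \<in> K \<longleftrightarrow> g e \<in> B0"
proof
  assume "g \<in> K" thus "g e \<in> B0" unfolding B0_def by blast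
next
  assume "g e \<in> B0"
  then obtain k where k: "k \<in> K" "g e = k e" unfolding B0_def by blast
  have kG: "k \<in> carrier G" using k K_G by blast
  have "inv\<^bsub>G\<^esub> k \<otimes>\<^bsub>G\<^esub> g \<in> carrier G" using kG g by simp
  moreover have "(inv\<^bsub>G\<^esub> k \<otimes>\<^bsub>G\<^esub> g) e = e"
    using kG g eL k by (simp add: app inv_app)
  ultimately have "inv\<^bsub>G\<^esub> k \<otimes>\<^bsub>G\<^esub> g \<in> K" using HK H_eq by blast
  hence "k \<otimes>\<^bsub>G\<^esub> (inv\<^bsub>G\<^esub> k \<otimes>\<^bsub>G\<^esub> g) \<in> K"
    using k subgroup.m_closed[OF subK] by blast
  moreover have "k \<otimes>\<^bsub>G\<^esub> (inv\<^bsub>G\<^esub> k \<otimes>\<^bsub>G\<^esub> g) = g"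
    using kG g by (simp add: Gr.m_assoc[symmetric])
  ultimately show "g \<in> K" by simp
qed

lemma rm_inK: "a \<in> L \<Longrightarrow> rmult L m a \<in> K \<longleftrightarrow> a \<in> B0"
  using inK_iff[OF rm_G] rm_e by simp

lemma B0_ne: "\<exists>b \<in> L. b \<notin> B0"
proof (rule ccontr)
  assume "\<not> ?thesis"
  hence "L \<subseteq> B0" by blast
  hence "T \<subseteq> K" using rm_inK unfolding rmults_def by blast
  hence "generate G T \<subseteq> K" using Gr.generate_subgroup_incl[OF _ subK] by blast
  thus False using carrG2 KG K_G by blast
qed

lemma K_stable: "k \<in> K \<Longrightarrow> x \<in> B0 \<Longrightarrow> k x \<in> B0"
proof -
  assume k: "k \<in> K" and "x \<in> B0"
  then obtain k' where k': "k' \<in> K" "x = k' e" unfolding B0_def by blast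
  have "k x = (k \<otimes>\<^bsub>G\<^esub> k') e" using k k' K_G eL app[of k k' e] by (metis subsetD)
  moreover have "k \<otimes>\<^bsub>G\<^esub> k' \<in> K" using k k' subgroup.m_closed[OF subK] by blast
  ultimately show ?thesis unfolding B0_def by blast
qed

lemma K_back: "k \<in> K \<Longrightarrow> x \<in> L \<Longrightarrow> k x \<in> B0 \<Longrightarrow> x \<in> B0"
proof -
  assume k: "k \<in> K" and x: "x \<in> L" and kx: "k x \<in> B0"
  have "inv\<^bsub>G\<^esub> k \<in> K" using k subgroup.m_inv_closed[OF subK] by blast
  hence "(inv\<^bsub>G\<^esub> k) (k x) \<in> B0" using K_stable kx by blast
  thus ?thesis using inv_app k K_G x by auto
qed

lemma notK_out: "g \<in> carrier G \<Longrightarrow> g \<notin> K \<Longrightarrow> x \<in> B0 \<Longrightarrow> g x \<notin> B0"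
proof
  assume g: "g \<in> carrier G" "g \<notin> K" and "x \<in> B0" and gx: "g x \<in> B0"
  then obtain k where k: "k \<in> K" "x = k e" unfolding B0_def by blast
  have kG: "k \<in> carrier G" using k K_G by blast
  have "(g \<otimes>\<^bsub>G\<^esub> k) e \<in> B0" using gx k kG g eL app by auto
  hence "g \<otimes>\<^bsub>G\<^esub> k \<in> K" using inK_iff g kG by simp
  hence "g \<otimes>\<^bsub>G\<^esub> k \<otimes>\<^bsub>G\<^esub> inv\<^bsub>G\<^esub> k \<in> K"
    using k subgroup.m_closed[OF subK] subgroup.m_inv_closed[OF subK] by blast
  moreover have "g \<otimes>\<^bsub>G\<^esub> k \<otimes>\<^bsub>G\<^esub> inv\<^bsub>G\<^esub> k = g" using g kG by (simp add: Gr.m_assoc)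
  ultimately show False using g by simp
qed

lemma TK_G: "T \<inter> K \<subseteq> carrier G" using T_G by blast
lemma K1_sub: "subgroup K1 G" using Gr.generate_is_subgroup[OF TK_G] .
lemma K1_K: "K1 \<subseteq> K" using Gr.generate_subgroup_incl[OF _ subK] by blast
lemma TK_K1: "T \<inter> K \<subseteq> K1" by (blast intro: generate.incl)
lemma K1_G: "K1 \<subseteq> carrier G" using K1_K K_G by blast

lemma cm_app: "s \<in> T \<Longrightarrow> s \<notin> K \<Longrightarrow> k \<in> K1 \<Longrightarrow> x \<in> L \<Longrightarrow> s (k x) = k (s x)"
proof -
  assume s: "s \<in> T" "s \<notin> K" and k: "k \<in> K1" and x: "x \<in> L"
  have "s \<otimes>\<^bsub>G\<^esub> k = k \<otimes>\<^bsub>G\<^esub> s" using cm s k by blast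
  moreover have "s \<in> carrier G" "k \<in> carrier G" using s k T_G K1_G by auto
  ultimately show ?thesis using app x by metis
qed

lemma semireg: assumes k: "k \<in> K1" and ke: "k e = e" shows "k = \<one>\<^bsub>G\<^esub>"
proof (rule extG)
  show "k \<in> carrier G" using k K1_G by blast
  show "\<one>\<^bsub>G\<^esub> \<in> carrier G" by simp
  fix x assume x: "x \<in> L"
  show "k x = \<one>\<^bsub>G\<^esub> x"
  proof (cases "x \<in> B0")
    case False
    hence "rmult L m x \<in> T" "rmult L m x \<notin> K" using x rm_inK unfolding rmults_def by auto
    hence "rmult L m x (k e) = k (rmult L m x e)" using cm_app k eL by blast
    thus ?thesis using ke rm_e x one_app by simp
  next
    case True
    obtain b where b: "b \<in> L" "b \<notin> B0" using B0_ne by blast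
    obtain y where y: "y \<in> L" "m b y = x" using loop_ld[OF lp b(1) x] by blast
    have yB: "y \<notin> B0"
    proof
      assume "y \<in> B0"
      hence "rmult L m y \<in> K" using rm_inK y by simp
      moreover have "rmult L m y b \<in> B0" using rm_app y b True by simp
      ultimately show False using K_back b by blast
    qed
    have s1: "rmult L m y \<in> T" "rmult L m y \<notin> K" using y yB rm_inK unfolding rmults_def by auto
    have s2: "rmult L m b \<in> T" "rmult L m b \<notin> K" using b rm_inK unfolding rmults_def by auto
    have xe: "x = rmult L m y (rmult L m b e)" using rm_e rm_app b y by simp
    have "k x = rmult L m y (k (rmult L m b e))" unfolding xe
      using cm_app[OF s1 k] maps rm_G b eL by simp
    also have "\<dots> = rmult L m y (rmult L m b (k e))"
      using cm_app[OF s2 k eL] by simp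
    finally show ?thesis using ke xe one_app x by simp
  qed
qed

lemma K1_inj: assumes k: "k \<in> K1" "k' \<in> K1" "k e = k' e" shows "k = k'"
proof -
  have kG: "k \<in> carrier G" "k' \<in> carrier G" using k K1_G by auto
  have "inv\<^bsub>G\<^esub> k' \<otimes>\<^bsub>G\<^esub> k \<in> K1"
    using k subgroup.m_closed[OF K1_sub] subgroup.m_inv_closed[OF K1_sub] by blast
  moreover have "(inv\<^bsub>G\<^esub> k' \<otimes>\<^bsub>G\<^esub> k) e = e" using kG k eL by (simp add: app inv_app)
  ultimately have "inv\<^bsub>G\<^esub> k' \<otimes>\<^bsub>G\<^esub> k = \<one>\<^bsub>G\<^esub>" using semireg by blast
  thus ?thesis using kG by (metis Gr.inv_equality Gr.inv_inv Gr.inv_closed)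
qed


lemma card_image_rel:
  assumes rel: "\<forall>x\<in>A. \<forall>y\<in>A. f x = f y \<longleftrightarrow> g x = g y"
  shows "card (f ` A) = card (g ` A)"
proof -
  define h where "h z = g (SOME x. x \<in> A \<and> f x = z)" for z
  have hf: "h (f x) = g x" if "x \<in> A" for x
  proof -
    have "\<exists>y. y \<in> A \<and> f y = f x" using that by blast
    hence "(SOME y. y \<in> A \<and> f y = f x) \<in> A \<and> f (SOME y. y \<in> A \<and> f y = f x) = f x"
      by (rule someI_ex)
    thus ?thesis unfolding h_def using rel that by blast
  qed
  have "bij_betw h (f ` A) (g ` A)"
  proof (rule bij_betw_imageI)
    show "inj_on h (f ` A)"
    proof (rule inj_onI)
      fix z1 z2 assume "z1 \<in> f ` A" "z2 \<in> f ` A" "h z1 = h z2"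
      then obtain x1 x2 where "x1 \<in> A" "x2 \<in> A" "z1 = f x1" "z2 = f x2" "h (f x1) = h (f x2)" by blast
      thus "z1 = z2" using hf rel by metis
    qed
    show "h ` f ` A = g ` A" using hf by (auto simp: image_iff)
  qed
  thus ?thesis by (rule bij_betw_same_card)
qed

lemma finB0: "finite B0" using finite_subset[OF B0_L finL] .

lemma card_B0: "card B0 = p"
proof -
  have eq1: "{H #>\<^bsub>G\<^esub> k | k. k \<in> K} = (\<lambda>k. H #>\<^bsub>G\<^esub> k) ` K" by blast
  have rel: "\<forall>k\<in>K. \<forall>k'\<in>K. H #>\<^bsub>G\<^esub> k = H #>\<^bsub>G\<^esub> k' \<longleftrightarrow> (inv\<^bsub>G\<^esub> k) e = (inv\<^bsub>G\<^esub> k') e"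
  proof (intro ballI iffI)
    fix k k' assume k: "k \<in> K" "k' \<in> K"
    hence kG: "k \<in> carrier G" "k' \<in> carrier G" using K_G by auto
    {
      assume "H #>\<^bsub>G\<^esub> k = H #>\<^bsub>G\<^esub> k'"
      hence "k' \<in> H #>\<^bsub>G\<^esub> k" using Gr.repr_independenceD[OF H_sub kG(2)] by simp
      hence "k' \<otimes>\<^bsub>G\<^esub> inv\<^bsub>G\<^esub> k \<in> H" using subgroup.rcos_module_imp[OF H_sub grpG kG(1)] by simp
      hence "(k' \<otimes>\<^bsub>G\<^esub> inv\<^bsub>G\<^esub> k) e = e" using H_eq by blast
      hence "k' ((inv\<^bsub>G\<^esub> k) e) = e" using kG eL app by simp
      hence "(inv\<^bsub>G\<^esub> k') (k' ((inv\<^bsub>G\<^esub> k) e)) = (inv\<^bsub>G\<^esub> k') e" by simp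
      thus "(inv\<^bsub>G\<^esub> k) e = (inv\<^bsub>G\<^esub> k') e" using inv_app kG eL maps by simp
    }
    {
      assume eq: "(inv\<^bsub>G\<^esub> k) e = (inv\<^bsub>G\<^esub> k') e"
      have "(k' \<otimes>\<^bsub>G\<^esub> inv\<^bsub>G\<^esub> k) e = e" using kG eL app eq app_inv by simp
      hence "k' \<otimes>\<^bsub>G\<^esub> inv\<^bsub>G\<^esub> k \<in> H" using H_eq kG by simp
      hence "k' \<in> H #>\<^bsub>G\<^esub> k" using subgroup.rcos_module_rev[OF H_sub grpG kG(1) kG(2)] by simp
      thus "H #>\<^bsub>G\<^esub> k = H #>\<^bsub>G\<^esub> k'" using Gr.repr_independence[OF _ kG(1) H_sub] by simp
    }
  qed
  have eq2: "(\<lambda>k. (inv\<^bsub>G\<^esub> k) e) ` K = B0"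
  proof
    show "(\<lambda>k. (inv\<^bsub>G\<^esub> k) e) ` K \<subseteq> B0" unfolding B0_def using subgroup.m_inv_closed[OF subK] by blast
    show "B0 \<subseteq> (\<lambda>k. (inv\<^bsub>G\<^esub> k) e) ` K"
    proof
      fix x assume "x \<in> B0"
      then obtain k where k: "k \<in> K" "x = k e" unfolding B0_def by blast
      have "inv\<^bsub>G\<^esub> k \<in> K" using subgroup.m_inv_closed[OF subK k(1)] .
      moreover have "inv\<^bsub>G\<^esub> (inv\<^bsub>G\<^esub> k) = k" using k K_G by auto
      ultimately show "x \<in> (\<lambda>k. (inv\<^bsub>G\<^esub> k) e) ` K" using k by (metis image_eqI)
    qed
  qed
  have "card ((\<lambda>k. H #>\<^bsub>G\<^esub> k) ` K) = card ((\<lambda>k. (inv\<^bsub>G\<^esub> k) e) ` K)"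
    by (rule card_image_rel[OF rel])
  thus ?thesis using cos unfolding eq1 eq2 by simp
qed

lemma card_B1: "card (L - B0) = p"
  using card_Diff_subset[OF finB0 B0_L] card_B0 cardL by simp

lemma notK_img: assumes g: "g \<in> carrier G" "g \<notin> K" shows "g ` B0 = L - B0"
proof (rule card_subset_eq)
  show "finite (L - B0)" using finL by simp
  show "g ` B0 \<subseteq> L - B0" using notK_out[OF g] maps[OF g(1)] B0_L by blast
  have "inj_on g B0" using injG[OF g(1)] B0_L by (meson inj_onI subsetD)
  thus "card (g ` B0) = card (L - B0)" using card_image[of g B0] card_B0 card_B1 by simp
qed

lemma notK_in: assumes g: "g \<in> carrier G" "g \<notin> K" and x: "x \<in> L" "x \<notin> B0"
  shows "g x \<in> B0"
proof (rule ccontr)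
  assume "g x \<notin> B0"
  hence "g x \<in> g ` B0" using notK_img[OF g] maps[OF g(1) x(1)] by blast
  then obtain y where "y \<in> B0" "g x = g y" by blast
  thus False using injG[OF g(1) x(1)] B0_L x by blast
qed

lemma K_out: "k \<in> K \<Longrightarrow> x \<in> L \<Longrightarrow> x \<notin> B0 \<Longrightarrow> k x \<notin> B0"
  using K_back by blast

definition "b0 = (SOME b. b \<in> L \<and> b \<notin> B0)"
lemma b0: "b0 \<in> L" "b0 \<notin> B0"
  using someI_ex[of "\<lambda>b. b \<in> L \<and> b \<notin> B0"] B0_ne unfolding b0_def by auto

definition "s0 = rmult L m b0"
lemma s0: "s0 \<in> T" "s0 \<notin> K" "s0 \<in> carrier G" "s0 e = b0"
  using b0 rm_inK[of b0] rm_G[of b0] rm_e[of b0] unfolding s0_def rmults_def by auto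

lemma K1_rm: "a \<in> B0 \<Longrightarrow> rmult L m a \<in> K1"
  using rm_inK[of a] B0_L TK_K1 unfolding rmults_def by blast

lemma card_K1: "card K1 = p"
proof -
  have "bij_betw (\<lambda>k. k e) K1 B0"
  proof (rule bij_betw_imageI)
    show "inj_on (\<lambda>k. k e) K1" using K1_inj by (meson inj_onI)
    show "(\<lambda>k. k e) ` K1 = B0"
    proof
      show "(\<lambda>k. k e) ` K1 \<subseteq> B0" using K1_K unfolding B0_def by blast
      show "B0 \<subseteq> (\<lambda>k. k e) ` K1"
      proof
        fix a assume a: "a \<in> B0"
        hence "rmult L m a e = a" using rm_e B0_L by blast
        thus "a \<in> (\<lambda>k. k e) ` K1" using K1_rm[OF a] by (metis image_eqI)
      qed
    qed
  qed
  thus ?thesis using bij_betw_same_card card_B0 by metis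
qed

lemma p_gt1: "p > 1" using prime_gt_1_nat[OF pr] .

lemma K1_nontriv: "\<exists>t. t \<in> K1 \<and> t \<noteq> \<one>\<^bsub>G\<^esub>"
proof (rule ccontr)
  assume "\<not> ?thesis"
  hence "K1 \<subseteq> {\<one>\<^bsub>G\<^esub>}" by blast
  hence "card K1 \<le> card {\<one>\<^bsub>G\<^esub>}" by (intro card_mono) auto
  hence "card K1 \<le> 1" by simp
  thus False using card_K1 p_gt1 by simp
qed

definition "t0 = (SOME t. t \<in> K1 \<and> t \<noteq> \<one>\<^bsub>G\<^esub>)"
lemma t0: "t0 \<in> K1" "t0 \<noteq> \<one>\<^bsub>G\<^esub>"
  using someI_ex[OF K1_nontriv] unfolding t0_def by auto
lemma t0G: "t0 \<in> carrier G" using t0 K1_G by blast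

lemma ord_t0: "Gr.ord t0 = p"
proof -
  let ?G' = "G\<lparr>carrier := K1\<rparr>"
  have g': "group ?G'" using subgroup.subgroup_is_group[OF K1_sub grpG] .
  have tc: "t0 \<in> carrier ?G'" using t0 by simp
  have "group.ord ?G' t0 dvd order ?G'" using group.ord_dvd_group_order[OF g' tc] .
  moreover have "group.ord ?G' t0 = Gr.ord t0"
  proof -
    have "\<forall>n. group.ord ?G' t0 dvd n \<longleftrightarrow> Gr.ord t0 dvd n"
    proof
      fix n :: nat
      have "group.ord ?G' t0 dvd n \<longleftrightarrow> t0 [^]\<^bsub>?G'\<^esub> n = \<one>\<^bsub>?G'\<^esub>"
        using group.pow_eq_id[OF g' tc, of n] by (rule sym)
      also have "\<dots> \<longleftrightarrow> t0 [^]\<^bsub>G\<^esub> n = \<one>\<^bsub>G\<^esub>"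
      proof -
        have "t0 [^]\<^bsub>?G'\<^esub> n = t0 [^]\<^bsub>G\<^esub> n" by (rule Gr.nat_pow_consistent[symmetric])
        moreover have "\<one>\<^bsub>?G'\<^esub> = \<one>\<^bsub>G\<^esub>" by simp
        ultimately show ?thesis by (simp only:)
      qed
      also have "\<dots> \<longleftrightarrow> Gr.ord t0 dvd n" using Gr.pow_eq_id[OF t0G] by simp
      finally show "group.ord ?G' t0 dvd n \<longleftrightarrow> Gr.ord t0 dvd n" .
    qed
    hence "group.ord ?G' t0 dvd Gr.ord t0" "Gr.ord t0 dvd group.ord ?G' t0" by (metis dvd_refl)+
    thus ?thesis by (rule dvd_antisym)
  qed
  moreover have "order ?G' = p"
  proof -
    have cK: "carrier ?G' = K1" by simp
    show ?thesis unfolding order_def cK using card_K1 .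
  qed
  ultimately have "Gr.ord t0 dvd p" by (simp only:)
  moreover have "Gr.ord t0 \<noteq> 1" using Gr.ord_eq_1[OF t0G] t0 by simp
  moreover have "\<forall>m. m dvd p \<longrightarrow> m = 1 \<or> m = p" using pr unfolding prime_nat_iff by (elim conjE)
  ultimately show ?thesis by blast
qed


definition "pw i = t0 [^]\<^bsub>G\<^esub> (i::nat)"

lemma pw_K1: "pw i \<in> K1"
  unfolding pw_def
proof (induct i)
  case 0 show ?case using subgroup.one_closed[OF K1_sub] by simp
next
  case (Suc i)
  have "t0 [^]\<^bsub>G\<^esub> Suc i = t0 [^]\<^bsub>G\<^esub> i \<otimes>\<^bsub>G\<^esub> t0" by (rule Gr.nat_pow_Suc)
  thus ?case using subgroup.m_closed[OF K1_sub Suc t0(1)] by simp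
qed

lemma pw_G: "pw i \<in> carrier G" using pw_K1 K1_G by blast
lemma pw_K: "pw i \<in> K" using pw_K1 K1_K by blast

lemma pw_add: "pw i \<otimes>\<^bsub>G\<^esub> pw j = pw (i + j)"
  unfolding pw_def by (rule Gr.nat_pow_mult[OF t0G])

lemma pw_0: "pw 0 = \<one>\<^bsub>G\<^esub>" unfolding pw_def by simp

lemma pw_mod: "pw (i mod p) = pw i"
proof -
  have "pw (p * (i div p)) = \<one>\<^bsub>G\<^esub>"
    unfolding pw_def using Gr.pow_eq_id[OF t0G] ord_t0 by simp
  moreover have "pw i = pw (p * (i div p)) \<otimes>\<^bsub>G\<^esub> pw (i mod p)"
    using pw_add[of "p * (i div p)" "i mod p"] by simp
  ultimately show ?thesis using pw_G by simp
qed

lemma pw_inj: assumes "i < p" "j < p" "pw i = pw j" shows "i = j"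
proof -
  have inj: "inj_on (\<lambda>x. t0 [^]\<^bsub>G\<^esub> x) {0 .. p - 1}" using Gr.ord_inj[OF t0G] ord_t0 by simp
  have ij: "i \<in> {0 .. p - 1}" "j \<in> {0 .. p - 1}" using assms by auto
  have eq: "t0 [^]\<^bsub>G\<^esub> i = t0 [^]\<^bsub>G\<^esub> j" using assms(3) unfolding pw_def .
  show ?thesis using inj_onD[OF inj _ ij] eq by simp
qed

lemma finK1: "finite K1"
proof (rule ccontr)
  assume "infinite K1"
  hence "card K1 = 0" by simp
  thus False using card_K1 p_gt1 by simp
qed

lemma K1_pw: assumes "k \<in> K1" shows "\<exists>i<p. k = pw i"
proof -
  have "pw ` {..<p} = K1"
  proof (rule card_subset_eq[OF finK1])
    show "pw ` {..<p} \<subseteq> K1" using pw_K1 by blast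
    have "inj_on pw {..<p}" using pw_inj by (meson inj_onI lessThan_iff)
    thus "card (pw ` {..<p}) = card K1" using card_image card_K1 by fastforce
  qed
  thus ?thesis using assms by auto
qed

lemma K1_comm: assumes "k \<in> K1" "k' \<in> K1" shows "k \<otimes>\<^bsub>G\<^esub> k' = k' \<otimes>\<^bsub>G\<^esub> k"
proof -
  obtain i j where "k = pw i" "k' = pw j" using K1_pw assms by blast
  thus ?thesis using pw_add[of i j] pw_add[of j i] by (simp add: add.commute)
qed

lemma K1_center: "K1 \<subseteq> group_center G"
proof
  fix k assume k: "k \<in> K1"
  hence kG: "k \<in> carrier G" using K1_G by blast
  define C where "C = {g \<in> carrier G. g \<otimes>\<^bsub>G\<^esub> k = k \<otimes>\<^bsub>G\<^esub> g}"
  have "subgroup C G"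
  proof (rule Gr.subgroupI)
    show "C \<subseteq> carrier G" unfolding C_def by blast
    show "C \<noteq> {}" unfolding C_def using kG by auto
  next
    fix a assume "a \<in> C"
    hence a: "a \<in> carrier G" "a \<otimes>\<^bsub>G\<^esub> k = k \<otimes>\<^bsub>G\<^esub> a" unfolding C_def by auto
    have "inv\<^bsub>G\<^esub> a \<otimes>\<^bsub>G\<^esub> k = inv\<^bsub>G\<^esub> a \<otimes>\<^bsub>G\<^esub> (k \<otimes>\<^bsub>G\<^esub> a) \<otimes>\<^bsub>G\<^esub> inv\<^bsub>G\<^esub> a"
      using a(1) kG by (simp add: Gr.m_assoc)
    also have "\<dots> = inv\<^bsub>G\<^esub> a \<otimes>\<^bsub>G\<^esub> (a \<otimes>\<^bsub>G\<^esub> k) \<otimes>\<^bsub>G\<^esub> inv\<^bsub>G\<^esub> a"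
      using a by simp
    also have "\<dots> = k \<otimes>\<^bsub>G\<^esub> inv\<^bsub>G\<^esub> a"
      using a(1) kG by (simp add: Gr.m_assoc[symmetric])
    finally show "inv\<^bsub>G\<^esub> a \<in> C" unfolding C_def using a by simp
  next
    fix a b assume "a \<in> C" "b \<in> C"
    hence a: "a \<in> carrier G" "a \<otimes>\<^bsub>G\<^esub> k = k \<otimes>\<^bsub>G\<^esub> a"
      and b: "b \<in> carrier G" "b \<otimes>\<^bsub>G\<^esub> k = k \<otimes>\<^bsub>G\<^esub> b" unfolding C_def by auto
    have "a \<otimes>\<^bsub>G\<^esub> b \<otimes>\<^bsub>G\<^esub> k = a \<otimes>\<^bsub>G\<^esub> (b \<otimes>\<^bsub>G\<^esub> k)"
      using a(1) b(1) kG by (simp add: Gr.m_assoc)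
    also have "\<dots> = a \<otimes>\<^bsub>G\<^esub> (k \<otimes>\<^bsub>G\<^esub> b)" using b(2) by simp
    also have "\<dots> = (a \<otimes>\<^bsub>G\<^esub> k) \<otimes>\<^bsub>G\<^esub> b"
      using a(1) b(1) kG by (simp add: Gr.m_assoc)
    also have "\<dots> = (k \<otimes>\<^bsub>G\<^esub> a) \<otimes>\<^bsub>G\<^esub> b" using a(2) by simp
    also have "\<dots> = k \<otimes>\<^bsub>G\<^esub> (a \<otimes>\<^bsub>G\<^esub> b)"
      using a(1) b(1) kG by (simp add: Gr.m_assoc)
    finally show "a \<otimes>\<^bsub>G\<^esub> b \<in> C" unfolding C_def using a b by simp
  qed
  moreover have "T \<subseteq> C"
  proof
    fix a assume a: "a \<in> T"
    hence aG: "a \<in> carrier G" using T_G by blast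
    show "a \<in> C"
    proof (cases "a \<in> K")
      case True
      hence "a \<in> K1" using a TK_K1 by blast
      thus ?thesis unfolding C_def using aG K1_comm k by blast
    next
      case False
      thus ?thesis unfolding C_def using aG cm a k by blast
    qed
  qed
  ultimately have "generate G T \<subseteq> C" using Gr.generate_subgroup_incl by blast
  hence "carrier G \<subseteq> C" using carrG2 by simp
  thus "k \<in> group_center G" unfolding group_center_def C_def using kG by auto
qed

lemma central_app: "g \<in> carrier G \<Longrightarrow> k \<in> K1 \<Longrightarrow> x \<in> L \<Longrightarrow> g (k x) = k (g x)"
proof -
  assume g: "g \<in> carrier G" and k: "k \<in> K1" and x: "x \<in> L"
  have "k \<otimes>\<^bsub>G\<^esub> g = g \<otimes>\<^bsub>G\<^esub> k" using K1_center k g unfolding group_center_def by blast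
  moreover have "k \<in> carrier G" using k K1_G by blast
  ultimately show ?thesis using app[of g k x] app[of k g x] g x by simp
qed

lemma pw_app: "g \<in> carrier G \<Longrightarrow> x \<in> L \<Longrightarrow> g (pw i x) = pw i (g x)"
  using central_app pw_K1 by blast

lemma pw_pw: "x \<in> L \<Longrightarrow> pw i (pw j x) = pw (i + j) x"
  using app[OF pw_G pw_G, of x i j] pw_add[of i j] by simp

lemma pw_e_B0: "pw i e \<in> B0" unfolding B0_def using pw_K by blast
lemma pw_L: "x \<in> L \<Longrightarrow> pw i x \<in> L" using maps pw_G by blast
lemma pw_b_nB0: "pw i b0 \<notin> B0" using K_out pw_K b0 by blast

lemma B0_pw: "x \<in> B0 \<Longrightarrow> \<exists>i<p. x = pw i e"
proof -
  assume x: "x \<in> B0"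
  obtain i where i: "i < p" "rmult L m x = pw i" using K1_pw[OF K1_rm[OF x]] by blast
  moreover have "rmult L m x e = x" using rm_e x B0_L by blast
  ultimately show ?thesis by auto
qed

lemma B1_pw: "x \<in> L \<Longrightarrow> x \<notin> B0 \<Longrightarrow> \<exists>i<p. x = pw i b0"
proof -
  assume x: "x \<in> L" "x \<notin> B0"
  hence "x \<in> s0 ` B0" using notK_img[OF s0(3) s0(2)] by blast
  then obtain y where y: "y \<in> B0" "x = s0 y" by blast
  obtain i where i: "i < p" "y = pw i e" using B0_pw[OF y(1)] by blast
  have "x = pw i (s0 e)" using y i pw_app[OF s0(3) eL] by simp
  thus ?thesis using i s0(4) by auto
qed

lemma pw_e_eq: "pw i e = pw j e \<Longrightarrow> i mod p = j mod p"
proof -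
  assume "pw i e = pw j e"
  hence "pw i = pw j" using K1_inj pw_K1 by blast
  hence "pw (i mod p) = pw (j mod p)" using pw_mod by simp
  thus ?thesis using pw_inj p_gt1 by simp
qed

lemma pw_b_eq: "pw i b0 = pw j b0 \<Longrightarrow> i mod p = j mod p"
proof -
  assume h: "pw i b0 = pw j b0"
  have "s0 (pw i e) = pw i b0" "s0 (pw j e) = pw j b0" using pw_app[OF s0(3) eL] s0(4) by auto
  hence "s0 (pw i e) = s0 (pw j e)" using h by simp
  hence "pw i e = pw j e" using injG[OF s0(3)] pw_L eL by blast
  thus ?thesis by (rule pw_e_eq)
qed

definition "idx x = (SOME i. i < p \<and> (x = pw i e \<or> x = pw i b0))"

lemma idx_prop: "x \<in> L \<Longrightarrow> idx x < p \<and> (x = pw (idx x) e \<or> x = pw (idx x) b0)"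
proof -
  assume x: "x \<in> L"
  have "\<exists>i. i < p \<and> (x = pw i e \<or> x = pw i b0)"
    using B0_pw B1_pw x by (cases "x \<in> B0") blast+
  thus ?thesis unfolding idx_def by (rule someI_ex)
qed

lemma idx_lt: "x \<in> L \<Longrightarrow> idx x < p" using idx_prop by blast
lemma idx_B0: assumes "x \<in> B0" shows "x = pw (idx x) e"
proof -
  have "x \<in> L" using assms B0_L by blast
  hence "x = pw (idx x) e \<or> x = pw (idx x) b0" using idx_prop by blast
  moreover have "pw (idx x) b0 \<notin> B0" by (rule pw_b_nB0)
  hence "x \<noteq> pw (idx x) b0" using assms subst[of x "pw (idx x) b0" "\<lambda>z. z \<in> B0"] by blast
  ultimately show ?thesis by blast
qed
lemma idx_B1: assumes "x \<in> L" "x \<notin> B0" shows "x = pw (idx x) b0"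
proof -
  have "x = pw (idx x) e \<or> x = pw (idx x) b0" using idx_prop assms by blast
  moreover have "pw (idx x) e \<in> B0" by (rule pw_e_B0)
  hence "x \<noteq> pw (idx x) e"
  proof (intro notI)
    assume a: "pw (idx x) e \<in> B0" and h: "x = pw (idx x) e"
    have "x \<in> B0" using subst[OF h[symmetric], of "\<lambda>z. z \<in> B0"] a by blast
    thus False using assms by blast
  qed
  ultimately show ?thesis by blast
qed

lemma idx_e: "idx (pw k e) = k mod p"
proof -
  have "pw k e = pw (idx (pw k e)) e" using idx_B0 pw_e_B0 by blast
  hence "k mod p = idx (pw k e) mod p" by (rule pw_e_eq)
  thus ?thesis using idx_lt[OF pw_L[OF eL]] by simp
qed

lemma idx_b: "idx (pw k b0) = k mod p"
proof -
  have "pw k b0 = pw (idx (pw k b0)) b0" using idx_B1 pw_b_nB0 pw_L b0 by blast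
  hence "k mod p = idx (pw k b0) mod p" by (rule pw_b_eq)
  thus ?thesis using idx_lt[OF pw_L[OF b0(1)]] by simp
qed

definition "code x = (idx x, x \<notin> B0)"

lemma code_inj: assumes "x \<in> L" "y \<in> L" "code x = code y" shows "x = y"
proof -
  have i: "idx x = idx y" and bb: "(x \<in> B0) = (y \<in> B0)" using assms(3) unfolding code_def by auto
  show ?thesis
  proof (cases "x \<in> B0")
    case True
    thus ?thesis using idx_B0[of x] idx_B0[of y] i bb by simp
  next
    case False
    thus ?thesis using idx_B1[of x] idx_B1[of y] i bb assms by simp
  qed
qed

lemma e_pw: "e = pw 0 e" using pw_0 one_app eL by simp
lemma b_pw: "b0 = pw 0 b0" using pw_0 one_app b0 by simp

lemma code_e: "code e = (0, False)"
proof -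
  have "idx e = 0" using idx_e[of 0] e_pw by simp
  moreover have "e \<in> B0" using pw_e_B0[of 0] e_pw by simp
  ultimately show ?thesis unfolding code_def by simp
qed
lemma code_b: "code b0 = (0, True)"
proof -
  have "idx b0 = 0" using idx_b[of 0] b_pw by simp
  thus ?thesis unfolding code_def using b0 by simp
qed


abbreviation "W \<equiv> wreath_Cp_C2 p"

lemma carrW: "carrier W = ({0..<p} \<times> {0..<p}) \<times> (UNIV :: bool set)"
  by (simp add: wreath_Cp_C2_def)
lemma multW: "x \<otimes>\<^bsub>W\<^esub> y = wreath_mult p x y"
  by (simp add: wreath_Cp_C2_def)

definition "alpha w z = (let eps = (snd w \<noteq> snd z); c = (if eps then snd (fst w) else fst (fst w))
   in ((fst z + c) mod p, eps))"

definition "phi g = (if g e \<in> B0 then ((idx (g e), idx (g b0)), False) else ((idx (g b0), idx (g e)), True))"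

lemma wm_W: "w \<in> carrier W \<Longrightarrow> w' \<in> carrier W \<Longrightarrow> wreath_mult p w w' \<in> carrier W"
  using p_gt1 unfolding carrW wreath_mult_def Let_def by (auto simp: prod.swap_def)

lemma alpha_mult:
  assumes "w \<in> carrier W" "w' \<in> carrier W"
  shows "alpha (wreath_mult p w w') z = alpha w (alpha w' z)"
proof -
  obtain a b s where w: "w = ((a, b), s)" by (metis prod.collapse)
  obtain c d t where w': "w' = ((c, d), t)" by (metis prod.collapse)
  obtain i eps where z: "z = (i, eps)" by (metis prod.collapse)
  show ?thesis unfolding w w' z alpha_def wreath_mult_def Let_def
    by (cases s; cases t; cases eps) (simp_all add: mod_add_left_eq mod_add_right_eq add_ac)
qed

lemma alpha_faith:
  assumes "w \<in> carrier W" "w' \<in> carrier W"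
    and "alpha w (0, False) = alpha w' (0, False)" "alpha w (0, True) = alpha w' (0, True)"
  shows "w = w'"
proof -
  obtain a b s where w: "w = ((a, b), s)" by (metis prod.collapse)
  obtain c d t where w': "w' = ((c, d), t)" by (metis prod.collapse)
  have lt: "a < p" "b < p" "c < p" "d < p" using assms(1,2) unfolding w w' carrW by auto
  show ?thesis using assms(3,4) lt unfolding w w' alpha_def Let_def
    by (cases s; cases t) simp_all
qed

lemma phi_W: "g \<in> carrier G \<Longrightarrow> phi g \<in> carrier W"
  unfolding phi_def carrW using idx_lt maps eL b0 by auto

lemma gb_B1: "g \<in> carrier G \<Longrightarrow> g e \<in> B0 \<Longrightarrow> g b0 \<notin> B0"
  using inK_iff K_out b0 by blast
lemma gb_B0: "g \<in> carrier G \<Longrightarrow> g e \<notin> B0 \<Longrightarrow> g b0 \<in> B0"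
  using inK_iff notK_in b0 by blast

lemma code_pe: "code (pw k e) = (k mod p, False)"
  unfolding code_def using idx_e pw_e_B0 by simp
lemma code_pb: "code (pw k b0) = (k mod p, True)"
  unfolding code_def using idx_b pw_b_nB0 by simp

lemma action: assumes g: "g \<in> carrier G" and x: "x \<in> L"
  shows "code (g x) = alpha (phi g) (code x)"
proof (cases "x \<in> B0")
  case xB: True
  define i where "i = idx x"
  have xe: "x = pw i e" using idx_B0[OF xB] i_def by simp
  have cx: "code x = (i, False)" using xB i_def code_def by simp
  have gx: "g x = pw i (g e)" using xe pw_app[OF g eL] by simp
  show ?thesis
  proof (cases "g e \<in> B0")
    case True
    define j where "j = idx (g e)"
    have "g e = pw j e" using idx_B0[OF True] j_def by simp
    hence "g x = pw (i + j) e" using gx pw_pw eL by simp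
    moreover have "phi g = ((j, idx (g b0)), False)" using True j_def phi_def by simp
    ultimately show ?thesis using cx code_pe by (simp add: alpha_def)
  next
    case False
    define j where "j = idx (g e)"
    have "g e = pw j b0" using idx_B1[OF maps[OF g eL] False] j_def by simp
    hence "g x = pw (i + j) b0" using gx pw_pw b0 by simp
    moreover have "phi g = ((idx (g b0), j), True)" using False j_def phi_def by simp
    ultimately show ?thesis using cx code_pb by (simp add: alpha_def)
  qed
next
  case xB: False
  define i where "i = idx x"
  have xe: "x = pw i b0" using idx_B1[OF x xB] i_def by simp
  have cx: "code x = (i, True)" using xB i_def code_def by simp
  have gx: "g x = pw i (g b0)" using xe pw_app[OF g b0(1)] by simp
  show ?thesis
  proof (cases "g e \<in> B0")
    case True
    define j where "j = idx (g b0)"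
    have "g b0 = pw j b0" using idx_B1[OF maps[OF g b0(1)] gb_B1[OF g True]] j_def by simp
    hence "g x = pw (i + j) b0" using gx pw_pw b0 by simp
    moreover have "phi g = ((idx (g e), j), False)" using True j_def phi_def by simp
    ultimately show ?thesis using cx code_pb by (simp add: alpha_def)
  next
    case False
    define j where "j = idx (g b0)"
    have "g b0 = pw j e" using idx_B0[OF gb_B0[OF g False]] j_def by simp
    hence "g x = pw (i + j) e" using gx pw_pw eL by simp
    moreover have "phi g = ((j, idx (g e)), True)" using False j_def phi_def by simp
    ultimately show ?thesis using cx code_pe by (simp add: alpha_def)
  qed
qed

lemma phi_hom: assumes g: "g \<in> carrier G" and h: "h \<in> carrier G"
  shows "phi (g \<otimes>\<^bsub>G\<^esub> h) = wreath_mult p (phi g) (phi h)"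
proof (rule alpha_faith)
  show "phi (g \<otimes>\<^bsub>G\<^esub> h) \<in> carrier W" using phi_W g h by simp
  show "wreath_mult p (phi g) (phi h) \<in> carrier W" using wm_W phi_W g h by simp
  have key: "alpha (phi (g \<otimes>\<^bsub>G\<^esub> h)) (code y) = alpha (wreath_mult p (phi g) (phi h)) (code y)"
    if y: "y \<in> L" for y
  proof -
    have "alpha (phi (g \<otimes>\<^bsub>G\<^esub> h)) (code y) = code ((g \<otimes>\<^bsub>G\<^esub> h) y)"
      using action[of "g \<otimes>\<^bsub>G\<^esub> h" y] g h y by simp
    also have "\<dots> = code (g (h y))" using app g h y by simp
    also have "\<dots> = alpha (phi g) (code (h y))" using action g maps h y by simp
    also have "\<dots> = alpha (phi g) (alpha (phi h) (code y))" using action h y by simp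
    also have "\<dots> = alpha (wreath_mult p (phi g) (phi h)) (code y)"
      using alpha_mult[OF phi_W[OF g] phi_W[OF h]] by simp
    finally show ?thesis .
  qed
  show "alpha (phi (g \<otimes>\<^bsub>G\<^esub> h)) (0, False) = alpha (wreath_mult p (phi g) (phi h)) (0, False)"
    using key[OF eL] code_e by simp
  show "alpha (phi (g \<otimes>\<^bsub>G\<^esub> h)) (0, True) = alpha (wreath_mult p (phi g) (phi h)) (0, True)"
    using key[OF b0(1)] code_b by simp
qed

lemma phi_inj: "inj_on phi (carrier G)"
proof (rule inj_onI)
  fix g h assume g: "g \<in> carrier G" and h: "h \<in> carrier G" and eq: "phi g = phi h"
  show "g = h"
  proof (rule extG[OF g h])
    fix x assume x: "x \<in> L"
    have "code (g x) = code (h x)" using action[OF g x] action[OF h x] eq by simp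
    thus "g x = h x" using code_inj maps g h x by blast
  qed
qed


lemma H_nontriv: "\<exists>h. h \<in> H \<and> h \<noteq> \<one>\<^bsub>G\<^esub>"
proof -
  have "\<one>\<^bsub>G\<^esub> \<in> H" using subgroup.one_closed[OF H_sub] .
  thus ?thesis using Hne by blast
qed

definition "h0 = (SOME h. h \<in> H \<and> h \<noteq> \<one>\<^bsub>G\<^esub>)"
lemma h0: "h0 \<in> carrier G" "h0 e = e" "h0 \<in> K" "h0 \<noteq> \<one>\<^bsub>G\<^esub>"
  using someI_ex[OF H_nontriv] HK H_eq unfolding h0_def by auto

definition "d0 = idx (h0 b0)"

lemma d0: "h0 b0 = pw d0 b0" "d0 < p" "d0 \<noteq> 0"
proof -
  have nb: "h0 b0 \<notin> B0" using K_out[OF h0(3) b0] .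
  show hb: "h0 b0 = pw d0 b0" using idx_B1[OF maps[OF h0(1) b0(1)] nb] d0_def by simp
  show "d0 < p" using idx_lt[OF maps[OF h0(1) b0(1)]] d0_def by simp
  show "d0 \<noteq> 0"
  proof
    assume "d0 = 0"
    hence hb0: "h0 b0 = b0" using hb b_pw by simp
    have "h0 = \<one>\<^bsub>G\<^esub>"
    proof (rule extG[OF h0(1)])
      show "\<one>\<^bsub>G\<^esub> \<in> carrier G" by simp
      fix x assume x: "x \<in> L"
      show "h0 x = \<one>\<^bsub>G\<^esub> x"
      proof (cases "x \<in> B0")
        case True
        hence "x = pw (idx x) e" by (rule idx_B0)
        hence "h0 x = pw (idx x) (h0 e)" using pw_app[OF h0(1) eL] by metis
        thus ?thesis using h0(2) \<open>x = pw (idx x) e\<close> one_app x by simp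
      next
        case False
        hence "x = pw (idx x) b0" using idx_B1 x by blast
        hence "h0 x = pw (idx x) (h0 b0)" using pw_app[OF h0(1) b0(1)] by metis
        thus ?thesis using hb0 \<open>x = pw (idx x) b0\<close> one_app x by simp
      qed
    qed
    thus False using h0(4) by simp
  qed
qed

lemma h0_pow: "h0 [^]\<^bsub>G\<^esub> j \<in> carrier G \<and> (h0 [^]\<^bsub>G\<^esub> j) e = e \<and> (h0 [^]\<^bsub>G\<^esub> j) b0 = pw (j * d0) b0"
proof (induct j)
  case 0 show ?case using one_app eL b0 b_pw by simp
next
  case (Suc j)
  let ?a = "h0 [^]\<^bsub>G\<^esub> j"
  have aG: "?a \<in> carrier G" using Suc by simp
  have eq: "h0 [^]\<^bsub>G\<^esub> Suc j = ?a \<otimes>\<^bsub>G\<^esub> h0" by (rule Gr.nat_pow_Suc)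
  have "(?a \<otimes>\<^bsub>G\<^esub> h0) e = e" using app[OF aG h0(1) eL] h0(2) Suc by simp
  moreover have "(?a \<otimes>\<^bsub>G\<^esub> h0) b0 = pw (Suc j * d0) b0"
  proof -
    have "(?a \<otimes>\<^bsub>G\<^esub> h0) b0 = ?a (pw d0 b0)" using app[OF aG h0(1) b0(1)] d0(1) by simp
    also have "\<dots> = pw d0 (?a b0)" using pw_app[OF aG b0(1)] by simp
    also have "\<dots> = pw d0 (pw (j * d0) b0)" using Suc by simp
    also have "\<dots> = pw (d0 + j * d0) b0" using pw_pw b0(1) by simp
    finally show ?thesis by simp
  qed
  ultimately show ?case using eq aG h0(1) by simp
qed

lemma solve: assumes "c0 < p" "c1 < p" shows "\<exists>j. (c0 + j * d0) mod p = c1"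
proof -
  have "\<not> p dvd d0" using d0 by (auto dest: dvd_imp_le)
  hence "coprime p d0" using prime_imp_coprime[OF pr] by blast
  hence g1: "gcd d0 p = 1" by (simp add: coprime_iff_gcd_eq_1 gcd.commute)
  obtain x y where xy: "d0 * x = p * y + 1" using bezout_nat[of d0 p] d0(3) g1 by auto
  define k where "k = c1 + p - c0"
  have ck: "c0 + k = c1 + p" using assms k_def by simp
  have "c0 + (x * k) * d0 = c0 + k * (d0 * x)" by (simp add: ac_simps)
  also have "\<dots> = c0 + k + p * (k * y)" using xy by (simp add: algebra_simps)
  also have "\<dots> = c1 + p * (1 + k * y)" using ck by (simp add: algebra_simps)
  finally have eq: "c0 + (x * k) * d0 = c1 + p * (1 + k * y)" .
  have "(c0 + (x * k) * d0) mod p = c1 mod p" unfolding eq by (rule mod_mult_self2)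
  thus ?thesis using assms by auto
qed

lemma surjK: assumes "c0 < p" "c1 < p"
  shows "\<exists>k \<in> carrier G. k e = pw c0 e \<and> k b0 = pw c1 b0"
proof -
  obtain j where j: "(c0 + j * d0) mod p = c1" using solve assms by blast
  let ?k = "pw c0 \<otimes>\<^bsub>G\<^esub> h0 [^]\<^bsub>G\<^esub> j"
  have kG: "?k \<in> carrier G" using pw_G h0_pow by simp
  have "?k e = pw c0 e" using app[OF pw_G _ eL, of "h0 [^]\<^bsub>G\<^esub> j" c0] h0_pow by simp
  moreover have "?k b0 = pw c1 b0"
  proof -
    have "?k b0 = pw c0 (pw (j * d0) b0)" using app[OF pw_G _ b0(1), of "h0 [^]\<^bsub>G\<^esub> j" c0] h0_pow by simp
    also have "\<dots> = pw (c0 + j * d0) b0" using pw_pw b0(1) by simp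
    also have "\<dots> = pw ((c0 + j * d0) mod p) b0" using pw_mod by simp
    finally show ?thesis using j by simp
  qed
  ultimately show ?thesis using kG by blast
qed

lemma phi_surj: assumes w: "w \<in> carrier W" shows "\<exists>g \<in> carrier G. phi g = w"
proof -
  obtain c0 c1 s where ws: "w = ((c0, c1), s)" by (metis prod.collapse)
  have c: "c0 < p" "c1 < p" using w unfolding ws carrW by auto
  show ?thesis
  proof (cases s)
    case False
    obtain k where k: "k \<in> carrier G" "k e = pw c0 e" "k b0 = pw c1 b0" using surjK[OF c] by blast
    have "phi k = ((c0, c1), False)" unfolding phi_def using k pw_e_B0 idx_e idx_b c by simp
    thus ?thesis using k ws False by (intro bexI[of _ k]) auto
  next
    case True
    have sb: "s0 b0 \<in> B0" using gb_B0[OF s0(3)] s0(4) b0 by simp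
    define c where "c = idx (s0 b0)"
    have sbc: "s0 b0 = pw c e" using idx_B0[OF sb] c_def by simp
    have cp: "c < p" using idx_lt sb B0_L c_def by blast
    define c0' where "c0' = (c0 + p - c) mod p"
    have c0'p: "c0' < p" using p_gt1 c0'_def by simp
    obtain k where k: "k \<in> carrier G" "k e = pw c0' e" "k b0 = pw c1 b0" using surjK[OF c0'p c(2)] by blast
    let ?g = "k \<otimes>\<^bsub>G\<^esub> s0"
    have gG: "?g \<in> carrier G" using k s0 by simp
    have ge: "?g e = pw c1 b0" using app[OF k(1) s0(3) eL] s0(4) k by simp
    have "?g b0 = k (pw c e)" using app[OF k(1) s0(3) b0(1)] sbc by simp
    also have "\<dots> = pw c (pw c0' e)" using pw_app[OF k(1) eL] k by simp
    also have "\<dots> = pw (c + c0') e" using pw_pw eL by simp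
    finally have gb: "?g b0 = pw (c + c0') e" .
    have "(c + c0') mod p = (c + (c0 + p - c)) mod p" unfolding c0'_def by (simp add: mod_add_right_eq)
    also have "\<dots> = (c0 + p) mod p" using cp by simp
    also have "\<dots> = c0" using c by simp
    finally have cc: "(c + c0') mod p = c0" .
    have "phi ?g = ((c0, c1), True)" unfolding phi_def using ge gb pw_b_nB0 idx_e idx_b c cc by simp
    thus ?thesis using gG ws True by (intro bexI[of _ ?g]) auto
  qed
qed

lemma iso_W: "G \<cong> W"
proof (rule is_isoI)
  show "phi \<in> iso G W"
    unfolding iso_def hom_def
  proof (intro CollectI conjI)
    show "phi \<in> carrier G \<rightarrow> carrier W" using phi_W by blast
    show "\<forall>x\<in>carrier G. \<forall>y\<in>carrier G. phi (x \<otimes>\<^bsub>G\<^esub> y) = phi x \<otimes>\<^bsub>W\<^esub> phi y"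
      using phi_hom multW by simp
    show "bij_betw phi (carrier G) (carrier W)"
      unfolding bij_betw_def using phi_inj phi_W phi_surj by blast
  qed
qed

lemma H1_triv: "H \<inter> K1 = {\<one>\<^bsub>G\<^esub>}"
proof
  show "H \<inter> K1 \<subseteq> {\<one>\<^bsub>G\<^esub>}" using semireg H_eq by blast
  show "{\<one>\<^bsub>G\<^esub>} \<subseteq> H \<inter> K1"
    using subgroup.one_closed[OF H_sub] subgroup.one_closed[OF K1_sub] by blast
qed

end

theorem proposition5p5:
  fixes L :: "'a set" and m :: "'a \<Rightarrow> 'a \<Rightarrow> 'a" and e :: 'a and p :: nat
    and K :: "('a \<Rightarrow> 'a) set"
  defines "G \<equiv> rmlt_group L m"
    and "H \<equiv> env_stab L m e"
    and "T \<equiv> rmults L m"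
  defines "K1 \<equiv> generate G (T \<inter> K)"
  defines "H1 \<equiv> H \<inter> K1"
  assumes "Factorial_Ring.prime p" and "odd p"
    and "finite L" and "card L = 2 * p"
    and "rcc_loop L m e"
    and "subgroup K G"
    and "H \<subset> K" and "K \<subset> carrier G"
    and "card (rcosets\<^bsub>G\<^esub> K) = 2"
    and "card {H #>\<^bsub>G\<^esub> k | k. k \<in> K} = p"
    and "H \<noteq> {\<one>\<^bsub>G\<^esub>}"
    and "\<forall>s \<in> T - K. \<forall>k \<in> K1. s \<otimes>\<^bsub>G\<^esub> k = k \<otimes>\<^bsub>G\<^esub> s"
  shows "H1 = {\<one>\<^bsub>G\<^esub>} \<and> K1 \<subseteq> group_center G \<and> G \<cong> wreath_Cp_C2 p"
proof -
  have loc: "P55 L m e p K"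
  proof (rule P55.intro)
    show "loop L m e" using assms(10) unfolding rcc_loop_def by blast
    show "Factorial_Ring.prime p" using assms(6) .
    show "finite L" using assms(8) .
    show "card L = 2 * p" using assms(9) .
    show "subgroup K (rmlt_group L m)" using assms(11) unfolding G_def .
    show "env_stab L m e \<subseteq> K" using assms(12) unfolding H_def by blast
    show "K \<noteq> carrier (rmlt_group L m)" using assms(13) unfolding G_def by blast
    show "card {env_stab L m e #>\<^bsub>rmlt_group L m\<^esub> k | k. k \<in> K} = p"
      using assms(15) unfolding G_def H_def .
    show "env_stab L m e \<noteq> {\<one>\<^bsub>rmlt_group L m\<^esub>}" using assms(16) unfolding G_def H_def .
    show "\<forall>s \<in> rmults L m - K. \<forall>k \<in> generate (rmlt_group L m) (rmults L m \<inter> K).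
          s \<otimes>\<^bsub>rmlt_group L m\<^esub> k = k \<otimes>\<^bsub>rmlt_group L m\<^esub> s"
      using assms(17) unfolding G_def T_def K1_def .
  qed
  interpret P: P55 L m e p K by (rule loc)
  show ?thesis unfolding H1_def H_def K1_def G_def T_def
    using P.H1_triv P.K1_center P.iso_W by blast
qed

end
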